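(* Let $n\ge 2$. Let $\hat a_{i,i-1}>0$ and $\hat b_{i,i-1}\in\mathbb{R}$ for $2\le i\le n$, and for $1\le m\le k\le n$ put $\hat a_{k,m}:=\prod_{i=m+1}^{k}\hat a_{i,i-1}$ (so $\hat a_{k,k}=1$). Let $L_i\in\mathbb{R}$ ($2\le i\le n$) and $R_i\in\mathbb{R}$ ($1\le i\le n-1$) satisfy $L_i=\hat a_{i,i-1}R_{i-1}+\hat b_{i,i-1}$ for $2\le i\le n$, and $L_i\le R_i$ for $2\le i\le n-1$. Suppose $\prod_{i=1}^{j}\hat a_{n-(i-1),n-i}=\hat a_{n,n-j}\le 1$ for all $1\le j\le n-1$. Then for every $1\le j\le n-1$, $$\sum_{i=1}^{j}\bigl(L_{n-(i-1)}-R_{n-i}\bigr)\le(\hat a_{n,n-j}-1)\,R_{n-j}+\hat b_{n,n-1}+\sum_{i=n-j+1}^{n-1}\hat a_{n,i}\,\hat b_{i,i-1}.$$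
   Context: Setting: a timing packet traverses a chain of nodes $1,\ldots,n$; $L_i=\tau^{i,l}(t_{i,l})$ is the receive time-stamp of node $i$ and $R_i=\tau^{i,r}(t_{i,r})$ the send time-stamp of node $i$, generated by arbitrary "left" and "right" clocks. $\hat a_{i,i-1},\hat b_{i,i-1}$ are declared relative skews and offsets; $L_i=\hat a_{i,i-1}R_{i-1}+\hat b_{i,i-1}$ is the skew-consistency condition and $L_i\le R_i$ is causality. *)

theory Defs
  imports Main "HOL.Real"
begin

definition ahat :: "(nat \<Rightarrow> real) \<Rightarrow> nat \<Rightarrow> nat \<Rightarrow> real" where
  "ahat a k m = (\<Prod>i\<in>{m+1..k}. a i)"

end

theory Submission
  imports Defs
begin

theorem lemma2:
  fixes n :: nat and a b L R :: "nat \<Rightarrow> real"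
  assumes n2: "n \<ge> 2"
    and apos: "\<And>i. 2 \<le> i \<Longrightarrow> i \<le> n \<Longrightarrow> a i > 0"
    and skew: "\<And>i. 2 \<le> i \<Longrightarrow> i \<le> n \<Longrightarrow> L i = a i * R (i - 1) + b i"
    and causal: "\<And>i. 2 \<le> i \<Longrightarrow> i \<le> n - 1 \<Longrightarrow> L i \<le> R i"
    and prod_le: "\<And>j. 1 \<le> j \<Longrightarrow> j \<le> n - 1 \<Longrightarrow>
         (\<Prod>i=1..j. a (n - (i - 1))) = ahat a n (n - j) \<and> ahat a n (n - j) \<le> 1"
  shows "\<forall>j. 1 \<le> j \<and> j \<le> n - 1 \<longrightarrow>
     (\<Sum>i=1..j. L (n - (i - 1)) - R (n - i))
       \<le> (ahat a n (n - j) - 1) * R (n - j) + b n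
          + (\<Sum>i=n-j+1..n-1. ahat a n i * b i)"
proof -
  have main: "Suc m \<le> n - 1 \<Longrightarrow>
     (\<Sum>i=1..Suc m. L (n - (i - 1)) - R (n - i))
       \<le> (ahat a n (n - Suc m) - 1) * R (n - Suc m) + b n
          + (\<Sum>i=n-Suc m+1..n-1. ahat a n i * b i)" for m
  proof (induction m)
    case 0
    have "ahat a n (n - 1) = a n" using n2 unfolding ahat_def by simp
    moreover have "L n = a n * R (n - 1) + b n" using skew n2 by simp
    ultimately show ?case using n2 by (simp add: algebra_simps)
  next
    case (Suc m)
    define k where "k = n - Suc m"
    have k2: "2 \<le> k" and kn: "k \<le> n - 1" using Suc.prems n2 unfolding k_def by auto
    have IH: "(\<Sum>i=1..Suc m. L (n - (i - 1)) - R (n - i))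
       \<le> (ahat a n k - 1) * R k + b n + (\<Sum>i=k+1..n-1. ahat a n i * b i)"
      using Suc k_def by simp
    have Ak: "ahat a n k \<le> 1" using prod_le[of "Suc m"] Suc.prems k_def by auto
    have Lk: "L k \<le> R k" using causal k2 kn by simp
    have sk: "L k = a k * R (k - 1) + b k" using skew k2 kn by simp
    have A1: "ahat a n (k - 1) = a k * ahat a n k"
      unfolding ahat_def using k2 kn
      by (simp add: prod.atLeast_Suc_atMost)
    have S1: "(\<Sum>i=k..n-1. ahat a n i * b i) = ahat a n k * b k + (\<Sum>i=k+1..n-1. ahat a n i * b i)"
      using kn by (simp add: sum.atLeast_Suc_atMost)
    have sum2: "(\<Sum>i=1..Suc (Suc m). L (n - (i - 1)) - R (n - i))
        = (\<Sum>i=1..Suc m. L (n - (i - 1)) - R (n - i)) + (L k - R (k - 1))"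
      unfolding k_def by (simp add: sum.cl_ivl_Suc)
    have e1: "n - Suc (Suc m) = k - 1" and e2: "n - Suc (Suc m) + 1 = k"
      using k_def k2 by auto
    have "(ahat a n k - 1) * R k \<le> (ahat a n k - 1) * L k"
      using Ak Lk by (simp add: mult_left_mono_neg)
    have s3: "(\<Sum>i=n - Suc (Suc m)+1..n-1. ahat a n i * b i) = (\<Sum>i=k..n-1. ahat a n i * b i)"
      using e2 by simp
    have r3: "R (n - Suc (Suc m)) = R (k - 1)" "ahat a n (n - Suc (Suc m)) = ahat a n (k - 1)"
      using e1 by simp_all
    have alg: "(ahat a n k - 1) * L k + (L k - R (k - 1)) = (ahat a n (k-1) - 1) * R (k-1) + ahat a n k * b k"
      unfolding A1 sk by (simp add: algebra_simps)
    show ?case unfolding sum2 s3 r3 S1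
      using IH \<open>(ahat a n k - 1) * R k \<le> _\<close> alg by linarith
  qed
  show ?thesis
  proof (intro allI impI)
    fix j assume j: "1 \<le> j \<and> j \<le> n - 1"
    then obtain m where "j = Suc m" by (cases j) auto
    thus "(\<Sum>i=1..j. L (n - (i - 1)) - R (n - i))
       \<le> (ahat a n (n - j) - 1) * R (n - j) + b n
          + (\<Sum>i=n-j+1..n-1. ahat a n i * b i)" using main j by simp
  qed
qed

end
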